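(* Let $\psi=(P_0,P_1)$ be a two-party, $r$-round, $\gamma$-consistent coin-flipping protocol (in the plain model). Then there exist a party $P\in\{P_0,P_1\}$, a round index $i^*\in[r]$, an index $j^*\in\{i^*,i^*-1\}$, and a bit $b\in\{0,1\}$ such that the following holds. Let $b_{j^*}$ denote the output of $P$ in case the other party aborts in round $j^*$, and consider the fail-stop attacker that corrupts $P$, follows the protocol honestly, and instructs $P$ to abort in round $i^*$ if $b_{j^*}=b$ (and otherwise continues honestly until the end). Then this attacker biases the output of the other party by at least $\gamma/(8r+2)$.
   Context: A two-party coin-flipping protocol is $\gamma$-consistent if in an honest execution each party's output is a uniform bit and the two parties output the same value with probability at least $1/2+\gamma$. If a party aborts (stops sending messages), the other party still outputs a bit determined by the protocol's prescribed default behavior. A fail-stop attacker follows the protocol except that it may stop sending messages at some round. An attacker biases the output of the other party by $\epsilon$ if the expected output of that party differs from $1/2$ by at least $\epsilon$. *)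

theory Defs
  imports "HOL-Probability.Probability"
begin

(* The parties hold independent private coins (types 'a and 'b).
   In every round i \<in> {1..r}: first P0 sends a message, then P1 sends a message.
   - next0 i x ys : P0's round-i message, given its coins x and the messages ys it
                    received from P1 so far (rounds 1..i-1);
   - next1 i y xs : P1's round-i message, given its coins y and P0's messages
                    (rounds 1..i);
   - out0 x ys    : P0's output given its coins and the list ys of P1's messages it
                    received; this is the honest output when length ys = r and the
                    prescribed default output when P1 stopped earlier;
   - out1 y xs    : likewise for P1.
   (A party's own messages are determined by its coins and received messages, so
   the output may depend on the party's whole view.) *)
record ('a, 'b, 'm) protocol =
  rounds :: nat
  coins0 :: "'a pmf"
  coins1 :: "'b pmf"
  next0 :: "nat \<Rightarrow> 'a \<Rightarrow> 'm list \<Rightarrow> 'm"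
  next1 :: "nat \<Rightarrow> 'b \<Rightarrow> 'm list \<Rightarrow> 'm"
  out0 :: "'a \<Rightarrow> 'm list \<Rightarrow> bool"
  out1 :: "'b \<Rightarrow> 'm list \<Rightarrow> bool"

datatype party = P0 | P1

fun exec :: "('a, 'b, 'm) protocol \<Rightarrow> 'a \<Rightarrow> 'b \<Rightarrow> nat \<Rightarrow> 'm list \<times> 'm list" where
  "exec P x y 0 = ([], [])"
| "exec P x y (Suc k) =
     (let (xs, ys) = exec P x y k;
          u = next0 P (Suc k) x ys;
          v = next1 P (Suc k) y (xs @ [u])
      in (xs @ [u], ys @ [v]))"

definition msgs0 :: "('a, 'b, 'm) protocol \<Rightarrow> 'a \<Rightarrow> 'b \<Rightarrow> 'm list" where
  "msgs0 P x y = fst (exec P x y (rounds P))"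

definition msgs1 :: "('a, 'b, 'm) protocol \<Rightarrow> 'a \<Rightarrow> 'b \<Rightarrow> 'm list" where
  "msgs1 P x y = snd (exec P x y (rounds P))"

definition coins :: "('a, 'b, 'm) protocol \<Rightarrow> ('a \<times> 'b) pmf" where
  "coins P = pair_pmf (coins0 P) (coins1 P)"

definition honest_out0 :: "('a, 'b, 'm) protocol \<Rightarrow> 'a \<Rightarrow> 'b \<Rightarrow> bool" where
  "honest_out0 P x y = out0 P x (msgs1 P x y)"

definition honest_out1 :: "('a, 'b, 'm) protocol \<Rightarrow> 'a \<Rightarrow> 'b \<Rightarrow> bool" where
  "honest_out1 P x y = out1 P y (msgs0 P x y)"

definition consistent :: "('a, 'b, 'm) protocol \<Rightarrow> real \<Rightarrow> bool" where
  "consistent P \<gamma> \<longleftrightarrow>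
     measure_pmf.prob (coins P) {(x, y). honest_out0 P x y} = 1 / 2 \<and>
     measure_pmf.prob (coins P) {(x, y). honest_out1 P x y} = 1 / 2 \<and>
     measure_pmf.prob (coins P) {(x, y). honest_out0 P x y = honest_out1 P x y} \<ge> 1 / 2 + \<gamma>"

(* A fail-stop strategy for the corrupted party is a stopping
   rule  s i c v : given the round i, the corrupted party's coins c and the messages
   v it has received so far, abort in round i (i.e. send no message in round i or
   later).  Until it aborts it follows the protocol honestly. *)

(* P0 corrupted: when deciding on round i, P0 has received P1's messages of rounds
   1..i-1; if it aborts in round i, P1 has received P0's messages 1..i-1. *)
definition fs_out_vs0 :: "('a, 'b, 'm) protocol \<Rightarrow> (nat \<Rightarrow> 'a \<Rightarrow> 'm list \<Rightarrow> bool)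
      \<Rightarrow> 'a \<Rightarrow> 'b \<Rightarrow> bool" where
  "fs_out_vs0 P s x y =
     (if \<exists>i\<in>{1..rounds P}. s i x (take (i - 1) (msgs1 P x y))
      then (let i = (LEAST i. i \<in> {1..rounds P} \<and> s i x (take (i - 1) (msgs1 P x y)))
            in out1 P y (take (i - 1) (msgs0 P x y)))
      else honest_out1 P x y)"

(* P1 corrupted: when deciding on round i, P1 has received P0's messages of rounds
   1..i; if it aborts in round i, P0 has received P1's messages 1..i-1. *)
definition fs_out_vs1 :: "('a, 'b, 'm) protocol \<Rightarrow> (nat \<Rightarrow> 'b \<Rightarrow> 'm list \<Rightarrow> bool)
      \<Rightarrow> 'a \<Rightarrow> 'b \<Rightarrow> bool" where
  "fs_out_vs1 P s x y =
     (if \<exists>i\<in>{1..rounds P}. s i y (take i (msgs0 P x y))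
      then (let i = (LEAST i. i \<in> {1..rounds P} \<and> s i y (take i (msgs0 P x y)))
            in out0 P x (take (i - 1) (msgs1 P x y)))
      else honest_out0 P x y)"

(* Backup values  b_j : the output of a party in case the other party aborts in round j,
   i.e. the other party sends no further message after this party's round-j message.
   v is the list of messages the party has received (at least those up to round j).
   For P0 this means P1's messages of rounds 1..j-1 were received, for P1 it means
   P0's messages of rounds 1..j were received. *)
definition backup0 :: "('a, 'b, 'm) protocol \<Rightarrow> 'a \<Rightarrow> 'm list \<Rightarrow> nat \<Rightarrow> bool" where
  "backup0 P x v j = out0 P x (take (j - 1) v)"

definition backup1 :: "('a, 'b, 'm) protocol \<Rightarrow> 'b \<Rightarrow> 'm list \<Rightarrow> nat \<Rightarrow> bool" where
  "backup1 P y v j = out1 P y (take j v)"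

definition attack_out :: "('a, 'b, 'm) protocol \<Rightarrow> party \<Rightarrow> nat \<Rightarrow> nat \<Rightarrow> bool
      \<Rightarrow> 'a \<Rightarrow> 'b \<Rightarrow> bool" where
  "attack_out P p i j b x y =
     (case p of
        P0 \<Rightarrow> fs_out_vs0 P (\<lambda>k x' v. k = i \<and> backup0 P x' v j = b) x y
      | P1 \<Rightarrow> fs_out_vs1 P (\<lambda>k y' v. k = i \<and> backup1 P y' v j = b) x y)"

definition biases :: "('a, 'b, 'm) protocol \<Rightarrow> ('a \<Rightarrow> 'b \<Rightarrow> bool) \<Rightarrow> real \<Rightarrow> bool" where
  "biases P f \<epsilon> \<longleftrightarrow> \<bar>measure_pmf.prob (coins P) {(x, y). f x y} - 1 / 2\<bar> \<ge> \<epsilon>"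

end

theory Submission imports Defs begin

definition pr :: "'w pmf \<Rightarrow> ('w \<Rightarrow> bool) \<Rightarrow> real" where
  "pr M P = measure_pmf.prob M {w. P w}"

lemma pr_E: "pr M P = measure_pmf.expectation M (\<lambda>w. of_bool (P w))"
proof -
  have "(\<lambda>w. of_bool (P w) :: real) = indicator {w. P w}"
    by (auto simp: indicator_def)
  then show ?thesis by (simp add: pr_def)
qed

lemma intg: "integrable (measure_pmf M) (\<lambda>w. of_bool (P w) :: real)"
  by (rule measure_pmf.integrable_const_bound[where B=1]) auto

lemma lin:
  assumes "\<And>w. (of_bool (A w) :: real) + of_bool (B w) = of_bool (C w) + of_bool (D w)"
  shows "pr M A + pr M B = pr M C + pr M D"
proof -
  have "pr M A + pr M B = measure_pmf.expectation M (\<lambda>w. of_bool (A w) + of_bool (B w))"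
    by (simp add: pr_E intg)
  also have "\<dots> = measure_pmf.expectation M (\<lambda>w. of_bool (C w) + of_bool (D w))"
    using assms by simp
  also have "\<dots> = pr M C + pr M D" by (simp add: pr_E intg)
  finally show ?thesis .
qed

lemma pr_False[simp]: "pr M (\<lambda>_. False) = 0" by (simp add: pr_def)
lemma pr_True[simp]: "pr M (\<lambda>_. True) = 1" by (simp add: pr_def)
lemma pr_nonneg: "pr M P \<ge> 0" by (simp add: pr_def)

lemma swap:
  assumes "\<bar>pr M (\<lambda>w. if X w = True then Y w else Z w) - 1/2\<bar> < e"
      and "\<bar>pr M (\<lambda>w. if X w = False then Y w else Z w) - 1/2\<bar> < e"
  shows "\<bar>pr M (\<lambda>w. X w = Y w) - pr M (\<lambda>w. X w = Z w)\<bar> < 2*e"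
proof -
  have "pr M (\<lambda>w. X w = Y w) + pr M (\<lambda>w. if X w = False then Y w else Z w)
      = pr M (\<lambda>w. if X w = True then Y w else Z w) + pr M (\<lambda>w. X w = Z w)"
    by (rule lin) auto
  then show ?thesis using assms by linarith
qed

lemma anchor:
  fixes M :: "'w pmf" and c0 a1 aE :: "'w \<Rightarrow> bool"
  assumes half: "pr M aE = 1/2"
  and indep: "\<And>b. pr M (\<lambda>w. c0 w = b \<and> a1 w) = pr M (\<lambda>w. c0 w = b) * pr M a1"
  and BT: "\<bar>pr M (\<lambda>w. if c0 w = True then a1 w else aE w) - 1/2\<bar> < e"
  and BF: "\<bar>pr M (\<lambda>w. if c0 w = False then a1 w else aE w) - 1/2\<bar> < e"
  shows "pr M (\<lambda>w. c0 w = aE w) - 1/2 \<le> 2*e"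
proof -
  define p where "p = pr M (\<lambda>w. c0 w = True)"
  define q where "q = pr M (\<lambda>w. c0 w = False)"
  define mu where "mu = pr M a1"
  define eT where "eT = pr M (\<lambda>w. c0 w = True \<and> aE w)"
  define eF where "eF = pr M (\<lambda>w. c0 w = False \<and> aE w)"
  define nF where "nF = pr M (\<lambda>w. c0 w = False \<and> \<not> aE w)"
  define Y where "Y = pr M (\<lambda>w. c0 w = aE w)"
  define tT where "tT = pr M (\<lambda>w. if c0 w = True then a1 w else aE w)"
  define tF where "tF = pr M (\<lambda>w. if c0 w = False then a1 w else aE w)"
  have F1: "tT + 0 = p * mu + eF"
    unfolding tT_def p_def mu_def eF_def indep[of True, symmetric]
    by (subst pr_False[symmetric, of M], rule lin) auto
  have F1': "tF + 0 = q * mu + eT"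
    unfolding tF_def q_def mu_def eT_def indep[of False, symmetric]
    by (subst pr_False[symmetric, of M], rule lin) auto
  have F2: "Y + 0 = eT + nF"
    unfolding Y_def eT_def nF_def
    by (subst pr_False[symmetric, of M], rule lin) auto
  have F3: "nF + eF = q + 0"
    unfolding q_def eF_def nF_def
    by (subst pr_False[symmetric, of M], rule lin) auto
  have F4: "eT + eF = 1/2 + 0"
    unfolding eT_def eF_def half[symmetric]
    by (subst pr_False[symmetric, of M], rule lin) auto
  have F5: "p + q = 1 + 0"
    unfolding p_def q_def
    by (subst pr_False[symmetric, of M], subst pr_True[symmetric, of M], rule lin) auto
  have p0: "p \<ge> 0" "q \<ge> 0" unfolding p_def q_def by (rule pr_nonneg)+
  have id: "Y - 1/2 = 2*p*(tF - 1/2) - 2*q*(tT - 1/2)"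
  proof -
    have q: "q = 1 - p" using F5 by simp
    have e1: "tT = p*mu + eF" "tF = (1-p)*mu + eT" "Y = eT + nF" using F1 F1' F2 q by simp_all
    have e2: "nF = (1-p) - eF" "eT = 1/2 - eF" using F3 F4 q by simp_all
    show ?thesis unfolding q e1 unfolding e2 by (simp add: algebra_simps)
  qed
  have a1: "tF - 1/2 \<le> e" using BF unfolding tF_def by linarith
  have a2: "-(tT - 1/2) \<le> e" using BT unfolding tT_def by linarith
  have b1: "p * (tF - 1/2) \<le> p * e" using mult_left_mono[OF a1 p0(1)] .
  have b2: "q * (-(tT - 1/2)) \<le> q * e" using mult_left_mono[OF a2 p0(2)] .
  have c: "p * e + q * e = e" using F5 by (metis add_0_right distrib_right mult_1)
  have "Y - 1/2 \<le> 2*e" using id b1 b2 c by (simp add: algebra_simps)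
  then show ?thesis unfolding Y_def .
qed

lemma pr_sym: "pr M (\<lambda>w. A w = B w) = pr M (\<lambda>w. B w = A w)"
  by (rule arg_cong[where f="pr M"]) auto

lemma chain:
  fixes M :: "'w pmf" and a c :: "nat \<Rightarrow> 'w \<Rightarrow> bool" and r :: nat and e :: real
  assumes r1: "r \<ge> 1"
  and half: "pr M (a (Suc r)) = 1/2"
  and indep: "\<And>b. pr M (\<lambda>w. c 0 w = b \<and> a 1 w) = pr M (\<lambda>w. c 0 w = b) * pr M (a 1)"
  and A0: "\<And>i j b. i \<in> {1..r} \<Longrightarrow> j = i \<or> j = i - 1 \<Longrightarrow>
      \<bar>pr M (\<lambda>w. if a j w = b then c (i-1) w else c r w) - 1/2\<bar> < e"
  and A1: "\<And>i j b. i \<in> {1..r} \<Longrightarrow> j = i \<or> j = i - 1 \<Longrightarrow>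
      \<bar>pr M (\<lambda>w. if c j w = b then a i w else a (Suc r) w) - 1/2\<bar> < e"
  shows "pr M (\<lambda>w. c r w = a (Suc r) w) - 1/2 < 8 * real r * e"
proof -
  define X where "X k = pr M (\<lambda>w. a k w = c r w)" for k
  define Y where "Y k = pr M (\<lambda>w. c k w = a (Suc r) w)" for k
  have D1: "\<bar>pr M (\<lambda>w. a i w = c (i-1) w) - X i\<bar> < 2*e" if "i \<in> {1..r}" for i
    unfolding X_def by (rule swap; rule A0[OF that]; simp)
  have D2: "\<bar>pr M (\<lambda>w. a k w = c k w) - X k\<bar> < 2*e" if "k \<ge> 1" "k < r" for k
  proof -
    have "\<bar>pr M (\<lambda>w. a k w = c (Suc k - 1) w) - X k\<bar> < 2*e"
      unfolding X_def by (rule swap; rule A0[of "Suc k"]; use that in simp)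
    then show ?thesis by simp
  qed
  have D3: "\<bar>pr M (\<lambda>w. c i w = a i w) - Y i\<bar> < 2*e" if "i \<in> {1..r}" for i
    unfolding Y_def by (rule swap; rule A1[OF that]; simp)
  have D4: "\<bar>pr M (\<lambda>w. c (i-1) w = a i w) - Y (i-1)\<bar> < 2*e" if "i \<in> {1..r}" for i
    unfolding Y_def by (rule swap; rule A1[OF that]; simp)
  have step1: "X i < Y (i-1) + 4*e" if "i \<in> {1..r}" for i
  proof -
    have "pr M (\<lambda>w. a i w = c (i-1) w) = pr M (\<lambda>w. c (i-1) w = a i w)" by (rule pr_sym)
    then show ?thesis using D1[OF that] D4[OF that] unfolding abs_less_iff by linarith
  qed
  have step2: "Y k < X k + 4*e" if "k \<ge> 1" "k < r" for k
  proof -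
    have "pr M (\<lambda>w. a k w = c k w) = pr M (\<lambda>w. c k w = a k w)" by (rule pr_sym)
    moreover have "k \<in> {1..r}" using that by simp
    ultimately show ?thesis using D2[OF that] D3[of k] unfolding abs_less_iff by linarith
  qed
  have ind: "k \<ge> 1 \<Longrightarrow> k \<le> r \<Longrightarrow> X k < Y 0 + 8 * real k * e - 4*e" for k
  proof (induction k)
    case 0 then show ?case by simp
  next
    case (Suc k)
    show ?case
    proof (cases "k = 0")
      case True
      then show ?thesis using step1[of 1] Suc.prems by simp
    next
      case False
      then have "X k < Y 0 + 8 * real k * e - 4*e" using Suc by simp
      moreover have "Y k < X k + 4*e" using step2[of k] False Suc.prems by simp
      moreover have "X (Suc k) < Y k + 4*e" using step1[of "Suc k"] Suc.prems by simp
      ultimately show ?thesis by (simp add: algebra_simps)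
    qed
  qed
  have last: "Y r < X r + 2*e"
  proof -
    have "pr M (\<lambda>w. a r w = c r w) = pr M (\<lambda>w. c r w = a r w)" by (rule pr_sym)
    moreover have "r \<in> {1..r}" using r1 by simp
    ultimately show ?thesis using D3[of r] unfolding abs_less_iff X_def by linarith
  qed
  have anc: "Y 0 - 1/2 \<le> 2*e"
    unfolding Y_def
    by (rule anchor[OF half indep]; rule A1[of 1]; use r1 in simp)
  show ?thesis using ind[of r] r1 last anc unfolding Y_def[symmetric] by simp
qed

lemma exec_len: "length (fst (exec P x y k)) = k \<and> length (snd (exec P x y k)) = k"
  by (induction k) (auto simp: Let_def split: prod.splits)

lemma len0: "length (msgs0 P x y) = rounds P"
  using exec_len[of P x y "rounds P"] unfolding msgs0_def by simp
lemma len1: "length (msgs1 P x y) = rounds P"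
  using exec_len[of P x y "rounds P"] unfolding msgs1_def by simp

lemma take_r0[simp]: "take (rounds P) (msgs0 P x y) = msgs0 P x y"
  by (simp add: len0)
lemma take_r1[simp]: "take (rounds P) (msgs1 P x y) = msgs1 P x y"
  by (simp add: len1)

lemma least_eq[simp]: "(LEAST k::nat. k = i) = i"
  by (rule Least_equality) auto

lemma least_i: "(LEAST k::nat. k = i \<and> C) = i" if "C"
  using that by (intro Least_equality) auto

lemma att0:
  assumes "i \<in> {1..rounds Q}" "j \<le> i"
  shows "attack_out Q P0 i j b x y =
    (if out0 Q x (take (j-1) (msgs1 Q x y)) = b then out1 Q y (take (i-1) (msgs0 Q x y))
     else out1 Q y (take (rounds Q) (msgs0 Q x y)))"
proof -
  have tt: "take (j - 1) (take (i - 1) (msgs1 Q x y)) = take (j-1) (msgs1 Q x y)"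
    using assms by (simp add: min_def)
  have P: "(\<lambda>k. k \<in> {1..rounds Q} \<and> (k = i \<and> backup0 Q x (take (k - 1) (msgs1 Q x y)) j = b))
     = (\<lambda>k. k = i \<and> out0 Q x (take (j-1) (msgs1 Q x y)) = b)"
    using assms tt unfolding backup0_def by auto
  have E: "(\<exists>k\<in>{1..rounds Q}. k = i \<and> backup0 Q x (take (k - 1) (msgs1 Q x y)) j = b)
     = (out0 Q x (take (j-1) (msgs1 Q x y)) = b)"
    using assms tt unfolding backup0_def by auto
  show ?thesis
    unfolding attack_out_def fs_out_vs0_def honest_out1_def party.case
    unfolding E P using len0[of Q x y]
    by (auto simp: least_i Let_def)
qed

lemma att1:
  assumes "i \<in> {1..rounds Q}" "j \<le> i"
  shows "attack_out Q P1 i j b x y =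
    (if out1 Q y (take j (msgs0 Q x y)) = b then out0 Q x (take (i-1) (msgs1 Q x y))
     else out0 Q x (take (Suc (rounds Q) - 1) (msgs1 Q x y)))"
proof -
  have tt: "take j (take i (msgs0 Q x y)) = take j (msgs0 Q x y)"
    using assms by (simp add: min_def)
  have P: "(\<lambda>k. k \<in> {1..rounds Q} \<and> (k = i \<and> backup1 Q y (take k (msgs0 Q x y)) j = b))
     = (\<lambda>k. k = i \<and> out1 Q y (take j (msgs0 Q x y)) = b)"
    using assms tt unfolding backup1_def by auto
  have E: "(\<exists>k\<in>{1..rounds Q}. k = i \<and> backup1 Q y (take k (msgs0 Q x y)) j = b)
     = (out1 Q y (take j (msgs0 Q x y)) = b)"
    using assms tt unfolding backup1_def by auto
  show ?thesis
    unfolding attack_out_def fs_out_vs1_def honest_out0_def party.case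
    unfolding E P using len1[of Q x y]
    by (auto simp: least_i Let_def)
qed

lemma indep_pair:
  "measure_pmf.prob (pair_pmf A B) {w. g (snd w) \<and> f (fst w)} =
   measure_pmf.prob (pair_pmf A B) {w. g (snd w)} * measure_pmf.prob (pair_pmf A B) {w. f (fst w)}"
proof -
  have *: "measure_pmf.prob (pair_pmf A B) (S \<times> T) = measure_pmf.prob A S * measure_pmf.prob B T" for S T
  proof -
    have "measure_pmf.prob (pair_pmf A B) (S \<times> T) =
          measure_pmf.prob (pair_pmf A B) ((S \<inter> set_pmf A) \<times> (T \<inter> set_pmf B))"
      by (subst measure_Int_set_pmf[symmetric]) (auto intro!: arg_cong[where f="measure_pmf.prob _"])
    also have "\<dots> = measure_pmf.prob A (S \<inter> set_pmf A) * measure_pmf.prob B (T \<inter> set_pmf B)"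
      by (rule measure_pmf_prob_product) auto
    also have "\<dots> = measure_pmf.prob A S * measure_pmf.prob B T"
      by (simp add: measure_Int_set_pmf)
    finally show ?thesis .
  qed
  have s1: "{w. g (snd w) \<and> f (fst w)} = {x. f x} \<times> {y. g y}" by auto
  have s2: "{w. g (snd w)} = UNIV \<times> {y. g y}" by auto
  have s3: "{w. f (fst w)} = {x. f x} \<times> UNIV" by auto
  show ?thesis unfolding s1 s2 s3 * by simp
qed

theorem mainTheorem20:
  fixes Q :: "('a, 'b, 'm) protocol" and \<gamma> :: real
  assumes "rounds Q \<ge> 1"
    and "consistent Q \<gamma>"
  shows "\<exists>p::party. \<exists>i\<in>{1..rounds Q}. \<exists>j\<in>{i, i - 1}. \<exists>b::bool.
           biases Q (attack_out Q p i j b) (\<gamma> / (8 * real (rounds Q) + 2))"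
proof (cases "\<gamma> \<le> 0")
  case True
  have "\<gamma> / (8 * real (rounds Q) + 2) \<le> 0" using True by (simp add: divide_nonpos_pos)
  then have "biases Q (attack_out Q P0 1 1 True) (\<gamma> / (8 * real (rounds Q) + 2))"
    unfolding biases_def by (meson abs_ge_zero order_trans)
  moreover have "(1::nat) \<in> {1..rounds Q}" using assms(1) by simp
  moreover have "(1::nat) \<in> {1, 1 - 1}" by simp
  ultimately show ?thesis by blast
next
  case False
  define r where "r = rounds Q"
  define \<epsilon> where "\<epsilon> = \<gamma> / (8 * real r + 2)"
  define M where "M = coins Q"
  define a where "a k = (\<lambda>(x, y). out0 Q x (take (k-1) (msgs1 Q x y)))" for k
  define c where "c k = (\<lambda>(x, y). out1 Q y (take k (msgs0 Q x y)))" for k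
  show ?thesis
  proof (rule ccontr)
    assume neg: "\<not> ?thesis"
    have nb: "\<bar>measure_pmf.prob M {(x, y). attack_out Q p i j b x y} - 1/2\<bar> < \<epsilon>"
      if "i \<in> {1..r}" "j = i \<or> j = i - 1" for p i j b
    proof -
      have "j \<in> {i, i - 1}" using that(2) by auto
      then have "\<not> biases Q (attack_out Q p i j b) (\<gamma> / (8 * real (rounds Q) + 2))"
        using neg that(1) unfolding r_def by blast
      then show ?thesis unfolding biases_def r_def \<epsilon>_def M_def by simp
    qed
    have A0: "\<bar>pr M (\<lambda>w. if a j w = b then c (i-1) w else c r w) - 1/2\<bar> < \<epsilon>"
      if "i \<in> {1..r}" "j = i \<or> j = i - 1" for i j b
    proof -
      have "(\<lambda>w. if a j w = b then c (i-1) w else c r w) = (\<lambda>(x,y). attack_out Q P0 i j b x y)"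
        using that unfolding a_def c_def r_def by (auto simp: att0)
      then show ?thesis using nb[OF that, of P0 b] unfolding pr_def by simp
    qed
    have A1: "\<bar>pr M (\<lambda>w. if c j w = b then a i w else a (Suc r) w) - 1/2\<bar> < \<epsilon>"
      if "i \<in> {1..r}" "j = i \<or> j = i - 1" for i j b
    proof -
      have "(\<lambda>w. if c j w = b then a i w else a (Suc r) w) = (\<lambda>(x,y). attack_out Q P1 i j b x y)"
        using that unfolding a_def c_def r_def by (auto simp: att1)
      then show ?thesis using nb[OF that, of P1 b] unfolding pr_def by simp
    qed
    have cons: "measure_pmf.prob M {(x, y). honest_out0 Q x y} = 1 / 2"
         "measure_pmf.prob M {(x, y). honest_out0 Q x y = honest_out1 Q x y} \<ge> 1 / 2 + \<gamma>"
      using assms(2) unfolding consistent_def M_def by auto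
    have aS: "a (Suc r) = (\<lambda>(x,y). honest_out0 Q x y)"
      unfolding a_def honest_out0_def r_def by (auto simp: fun_eq_iff)
    have cr: "c r = (\<lambda>(x,y). honest_out1 Q x y)"
      unfolding c_def honest_out1_def r_def by (auto simp: fun_eq_iff)
    have half: "pr M (a (Suc r)) = 1/2" using cons(1) unfolding aS pr_def by simp
    have agree: "pr M (\<lambda>w. c r w = a (Suc r) w) \<ge> 1/2 + \<gamma>"
    proof -
      have "pr M (\<lambda>w. c r w = a (Suc r) w) = pr M (\<lambda>w. a (Suc r) w = c r w)" by (rule pr_sym)
      also have "\<dots> = measure_pmf.prob M {(x, y). honest_out0 Q x y = honest_out1 Q x y}"
        unfolding aS cr pr_def by (simp add: case_prod_unfold)
      finally show ?thesis using cons(2) by simp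
    qed
    have indep: "pr M (\<lambda>w. c 0 w = b \<and> a 1 w) = pr M (\<lambda>w. c 0 w = b) * pr M (a 1)" for b
    proof -
      have "pr M (\<lambda>w. c 0 w = b \<and> a 1 w) =
        measure_pmf.prob (pair_pmf (coins0 Q) (coins1 Q)) {w. (\<lambda>y. out1 Q y [] = b) (snd w) \<and> (\<lambda>x. out0 Q x []) (fst w)}"
        unfolding pr_def M_def coins_def a_def c_def by (simp add: case_prod_unfold)
      also have "\<dots> = measure_pmf.prob (pair_pmf (coins0 Q) (coins1 Q)) {w. (\<lambda>y. out1 Q y [] = b) (snd w)}
          * measure_pmf.prob (pair_pmf (coins0 Q) (coins1 Q)) {w. (\<lambda>x. out0 Q x []) (fst w)}"
        by (rule indep_pair)
      also have "\<dots> = pr M (\<lambda>w. c 0 w = b) * pr M (a 1)"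
        unfolding pr_def M_def coins_def a_def c_def by (simp add: case_prod_unfold)
      finally show ?thesis .
    qed
    have r1: "r \<ge> 1" using assms(1) r_def by simp
    have "pr M (\<lambda>w. c r w = a (Suc r) w) - 1/2 < 8 * real r * \<epsilon>"
      by (rule chain[OF r1 half indep A0 A1])
    then have lt: "\<gamma> < 8 * real r * \<epsilon>" using agree by linarith
    have pos: "8 * real r + 2 > 0" by simp
    have "8 * real r * \<epsilon> < \<gamma>"
    proof -
      have "8 * real r * \<epsilon> = \<gamma> * (8 * real r) / (8 * real r + 2)" unfolding \<epsilon>_def by simp
      also have "\<dots> < \<gamma>" using False pos by (simp add: divide_less_eq)
      finally show ?thesis .
    qed
    then show False using lt by simp
  qed
qed

end
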